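(* If $G$ is a $3$-$\gamma_{\rm tg}$-critical graph, then $G$ has no dominating vertex, and $\gamma_{\rm tg}(G|w)=2$ for every vertex $w$ of $G$.
   Context: A dominating vertex is a vertex adjacent to all other vertices. Total domination game on a graph without isolated vertices: Dominator and Staller alternately choose vertices, each chosen vertex must be adjacent to some vertex not yet totally dominated; the game ends when no legal move exists; Dominator minimizes, Staller maximizes the number of moves; $\gamma_{\rm tg}(G)$ is the number of moves in the Dominator-start game under optimal play. $G|w$ is $G$ with $w$ declared already totally dominated, with $\gamma_{\rm tg}(G|w)$ defined analogously. $G$ is $3$-$\gamma_{\rm tg}$-critical if $\gamma_{\rm tg}(G)=3$ and $\gamma_{\rm tg}(G|v)<3$ for every vertex $v$. *)

theory Defs
  imports Main
begin

definition graph_no_isolated :: "'a set \<Rightarrow> ('a \<Rightarrow> 'a \<Rightarrow> bool) \<Rightarrow> bool" where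
  "graph_no_isolated V E \<longleftrightarrow> finite V
     \<and> (\<forall>u v. E u v \<longrightarrow> u \<in> V \<and> v \<in> V)
     \<and> (\<forall>u v. E u v \<longrightarrow> E v u)
     \<and> (\<forall>v. \<not> E v v)
     \<and> (\<forall>v\<in>V. \<exists>u\<in>V. E v u)"

definition nbhd :: "'a set \<Rightarrow> ('a \<Rightarrow> 'a \<Rightarrow> bool) \<Rightarrow> 'a \<Rightarrow> 'a set" where
  "nbhd V E v = {u \<in> V. E v u}"

definition legal_moves :: "'a set \<Rightarrow> ('a \<Rightarrow> 'a \<Rightarrow> bool) \<Rightarrow> 'a set \<Rightarrow> 'a set" where
  "legal_moves V E D = {v \<in> V. \<exists>u \<in> V. E v u \<and> u \<notin> D}"

text \<open>Value of the total domination game under optimal play: D is the set of vertices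
  already totally dominated, d = True means Dominator (minimizer) is to move.\<close>
function tg_value :: "'a set \<Rightarrow> ('a \<Rightarrow> 'a \<Rightarrow> bool) \<Rightarrow> bool \<Rightarrow> 'a set \<Rightarrow> nat" where
  "tg_value V E d D =
     (if infinite V \<or> legal_moves V E D = {} then 0
      else if d then 1 + Min ((\<lambda>v. tg_value V E False (D \<union> nbhd V E v)) ` legal_moves V E D)
      else 1 + Max ((\<lambda>v. tg_value V E True (D \<union> nbhd V E v)) ` legal_moves V E D))"
  by auto
termination
proof (relation "measure (\<lambda>(V, E, d, D). card (V - D))", goal_cases)
  case 1 then show ?case by auto
next
  case (2 V E d D v)
  then obtain u where "u \<in> V" "E v u" "u \<notin> D" by (auto simp: legal_moves_def)
  hence "V - (D \<union> nbhd V E v) \<subset> V - D" by (auto simp: nbhd_def)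
  with 2 show ?case by (auto intro: psubset_card_mono)
next
  case (3 V E d D v)
  then obtain u where "u \<in> V" "E v u" "u \<notin> D" by (auto simp: legal_moves_def)
  hence "V - (D \<union> nbhd V E v) \<subset> V - D" by (auto simp: nbhd_def)
  with 3 show ?case by (auto intro: psubset_card_mono)
qed

definition gamma_tg :: "'a set \<Rightarrow> ('a \<Rightarrow> 'a \<Rightarrow> bool) \<Rightarrow> nat" where
  "gamma_tg V E = tg_value V E True {}"

text \<open>gamma_tg(G|w): Dominator-start game with w declared already totally dominated.\<close>
definition gamma_tg_pre :: "'a set \<Rightarrow> ('a \<Rightarrow> 'a \<Rightarrow> bool) \<Rightarrow> 'a \<Rightarrow> nat" where
  "gamma_tg_pre V E w = tg_value V E True {w}"

definition dominating_vertex :: "'a set \<Rightarrow> ('a \<Rightarrow> 'a \<Rightarrow> bool) \<Rightarrow> 'a \<Rightarrow> bool" where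
  "dominating_vertex V E v \<longleftrightarrow> v \<in> V \<and> (\<forall>u\<in>V. u \<noteq> v \<longrightarrow> E v u)"

definition three_tg_critical :: "'a set \<Rightarrow> ('a \<Rightarrow> 'a \<Rightarrow> bool) \<Rightarrow> bool" where
  "three_tg_critical V E \<longleftrightarrow> gamma_tg V E = 3 \<and> (\<forall>v\<in>V. gamma_tg_pre V E v < 3)"

end

theory Submission
  imports Defs
begin

declare tg_value.simps[simp del]

lemma legal_fin: "finite V \<Longrightarrow> finite (legal_moves V E D)"
  by (simp add: legal_moves_def)

lemma tv_zero_iff: "finite V \<Longrightarrow> tg_value V E d D = 0 \<longleftrightarrow> legal_moves V E D = {}"
  by (subst tg_value.simps) auto

lemma tv_True_le:
  assumes "finite V" "v \<in> legal_moves V E D"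
  shows "tg_value V E True D \<le> 1 + tg_value V E False (D \<union> nbhd V E v)"
proof -
  have "Min ((\<lambda>v. tg_value V E False (D \<union> nbhd V E v)) ` legal_moves V E D)
        \<le> tg_value V E False (D \<union> nbhd V E v)"
    using assms by (intro Min_le) (auto simp: legal_fin)
  thus ?thesis using assms by (subst tg_value.simps) auto
qed

lemma tv_False_le:
  assumes "finite V" "\<forall>v\<in>legal_moves V E D. tg_value V E True (D \<union> nbhd V E v) \<le> k"
  shows "tg_value V E False D \<le> 1 + k"
proof (cases "legal_moves V E D = {}")
  case True thus ?thesis using assms by (subst tg_value.simps) auto
next
  case False
  have "Max ((\<lambda>v. tg_value V E True (D \<union> nbhd V E v)) ` legal_moves V E D) \<le> k"
    using assms False by (subst Max_le_iff) (auto simp: legal_fin)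
  thus ?thesis using assms False by (subst tg_value.simps) auto
qed

lemma tv_True_one:
  assumes "finite V" "tg_value V E True D = 1"
  shows "\<exists>v\<in>legal_moves V E D. tg_value V E False (D \<union> nbhd V E v) = 0"
proof -
  have ne: "legal_moves V E D \<noteq> {}" using assms tv_zero_iff[of V E True D] by auto
  have "Min ((\<lambda>v. tg_value V E False (D \<union> nbhd V E v)) ` legal_moves V E D) = 0"
    using assms ne by (subst (asm) tg_value.simps) auto
  moreover have "Min ((\<lambda>v. tg_value V E False (D \<union> nbhd V E v)) ` legal_moves V E D)
     \<in> (\<lambda>v. tg_value V E False (D \<union> nbhd V E v)) ` legal_moves V E D"
    using ne assms by (intro Min_in) (auto simp: legal_fin)
  ultimately show ?thesis by force
qed

theorem lemma4p5:
  fixes V :: "'a set" and E :: "'a \<Rightarrow> 'a \<Rightarrow> bool"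
  assumes "graph_no_isolated V E"
    and "three_tg_critical V E"
  shows "(\<nexists>v. dominating_vertex V E v) \<and> (\<forall>w\<in>V. gamma_tg_pre V E w = 2)"
proof -
  have fin: "finite V" and inV: "\<And>u v. E u v \<Longrightarrow> u \<in> V \<and> v \<in> V"
    and sym: "\<And>u v. E u v \<Longrightarrow> E v u" and irr: "\<And>v. \<not> E v v"
    and noiso: "\<And>v. v \<in> V \<Longrightarrow> \<exists>u\<in>V. E v u"
    using assms(1) unfolding graph_no_isolated_def by blast+
  have g3: "tg_value V E True {} = 3" and crit: "\<And>v. v \<in> V \<Longrightarrow> tg_value V E True {v} < 3"
    using assms(2) unfolding three_tg_critical_def gamma_tg_def gamma_tg_pre_def by auto
  have nodom: "\<not> dominating_vertex V E v" for v
  proof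
    assume d: "dominating_vertex V E v"
    hence vV: "v \<in> V" and adj: "\<And>u. u \<in> V \<Longrightarrow> u \<noteq> v \<Longrightarrow> E v u"
      by (auto simp: dominating_vertex_def)
    obtain u where "u \<in> V" "E v u" using noiso vV by blast
    hence lv: "v \<in> legal_moves V E {}" using vV by (auto simp: legal_moves_def)
    have "\<forall>x\<in>legal_moves V E ({} \<union> nbhd V E v). tg_value V E True (({} \<union> nbhd V E v) \<union> nbhd V E x) \<le> 0"
    proof
      fix x assume x: "x \<in> legal_moves V E ({} \<union> nbhd V E v)"
      then obtain y where y: "y \<in> V" "E x y" "y \<notin> nbhd V E v" by (auto simp: legal_moves_def)
      have "y = v" using y adj by (auto simp: nbhd_def)
      hence "E x v" using y by simp
      hence "legal_moves V E (nbhd V E v \<union> nbhd V E x) = {}"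
      proof -
        have "u \<in> nbhd V E v \<union> nbhd V E x" if "u \<in> V" for u
          using adj[OF that] that \<open>E x v\<close> by (cases "u = v") (auto simp: nbhd_def)
        thus ?thesis unfolding legal_moves_def by blast
      qed
      thus "tg_value V E True (({} \<union> nbhd V E v) \<union> nbhd V E x) \<le> 0"
        using tv_zero_iff[OF fin] by simp
    qed
    from tv_False_le[OF fin this] tv_True_le[OF fin lv] g3 show False by simp
  qed
  have "tg_value V E True {w} = 2" if wV: "w \<in> V" for w
  proof -
    have ne0: "tg_value V E True {w} \<noteq> 0"
    proof
      assume "tg_value V E True {w} = 0"
      hence "legal_moves V E {w} = {}" using tv_zero_iff[OF fin] by blast
      moreover obtain u where u: "u \<in> V" "E w u" using noiso wV by blast
      have "u \<noteq> w" using u irr by metis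
      hence "w \<in> legal_moves V E {w}" using u wV unfolding legal_moves_def by blast
      ultimately show False by blast
    qed
    have ne1: "tg_value V E True {w} \<noteq> 1"
    proof
      assume "tg_value V E True {w} = 1"
      then obtain v where lv: "v \<in> legal_moves V E {w}"
        and z: "tg_value V E False ({w} \<union> nbhd V E v) = 0"
        using tv_True_one[OF fin] by blast
      have emp: "legal_moves V E ({w} \<union> nbhd V E v) = {}" using z tv_zero_iff[OF fin] by blast
      have vV: "v \<in> V" using lv by (auto simp: legal_moves_def)
      have cov: "u \<in> {w} \<union> nbhd V E v" if uV: "u \<in> V" for u
      proof -
        obtain x where "x \<in> V" "E u x" using noiso uV by blast
        hence "E x u" using sym by blast
        thus ?thesis using emp \<open>x \<in> V\<close> uV unfolding legal_moves_def by blast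
      qed
      show False
      proof (cases "w \<in> nbhd V E v")
        case True
        hence allN: "V \<subseteq> nbhd V E v" using cov by auto
        obtain u where "u \<in> V" "E v u" using noiso vV by blast
        hence lv0: "v \<in> legal_moves V E {}" using vV by (auto simp: legal_moves_def)
        have "legal_moves V E ({} \<union> nbhd V E v) = {}" using allN by (auto simp: legal_moves_def)
        hence "tg_value V E False ({} \<union> nbhd V E v) = 0" using tv_zero_iff[OF fin] by blast
        with tv_True_le[OF fin lv0] g3 show False by simp
      next
        case False
        have "v = w" using cov[OF vV] irr by (auto simp: nbhd_def)
        hence "dominating_vertex V E w" using cov False wV
          by (auto simp: dominating_vertex_def nbhd_def)
        thus False using nodom by blast
      qed
    qed
    show ?thesis using crit[OF wV] ne0 ne1 by linarith
  qed
  thus ?thesis using nodom unfolding gamma_tg_pre_def by blast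
qed

end
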